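(* The set $\{\pi\in\mathcal P:\text{all parts of }\pi\text{ are distinct}\}$ is $\Pi_2$-definable in $\mathbf Y^*=\langle\mathcal P,\le,[1]+[1]\rangle$.
   Context: $\mathcal P$ is the set of all integer partitions, including the empty partition; a partition is a nonincreasing finite sequence of positive integers (its parts). Young's lattice $\mathbf Y=\langle\mathcal P,\le\rangle$ has $(s_1,\dots,s_r)\le(n_1,\dots,n_t)$ iff $r\le t$ and $s_i\le n_i$ for all $i\le r$; $\mathbf Y^*$ is $\mathbf Y$ with a constant symbol for the partition $(1,1)$. A relation is $\Pi_n$-definable if it is defined by a first-order formula in the language $\{\le,(1,1)\}$ in prenex form with $n$ alternating quantifier blocks, the outermost universal, and a quantifier-free matrix. *)

theory Defs
  imports Main
begin

definition partitions :: "nat list set" where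
  "partitions = {xs. sorted_wrt (\<ge>) xs \<and> (\<forall>x\<in>set xs. 0 < x)}"

definition young_le :: "nat list \<Rightarrow> nat list \<Rightarrow> bool" where
  "young_le s n \<longleftrightarrow> length s \<le> length n \<and> (\<forall>i < length s. s ! i \<le> n ! i)"

definition part11 :: "nat list" where
  "part11 = [1, 1]"

datatype trm = Var nat | Cst

datatype qf =
    Le trm trm
  | Eq trm trm
  | Neg qf
  | Conj qf qf
  | Disj qf qf

fun eval_trm :: "(nat \<Rightarrow> nat list) \<Rightarrow> trm \<Rightarrow> nat list" where
  "eval_trm v (Var i) = v i"
| "eval_trm v Cst = part11"

fun eval_qf :: "(nat \<Rightarrow> nat list) \<Rightarrow> qf \<Rightarrow> bool" where
  "eval_qf v (Le s t) = young_le (eval_trm v s) (eval_trm v t)"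
| "eval_qf v (Eq s t) = (eval_trm v s = eval_trm v t)"
| "eval_qf v (Neg f) = (\<not> eval_qf v f)"
| "eval_qf v (Conj f g) = (eval_qf v f \<and> eval_qf v g)"
| "eval_qf v (Disj f g) = (eval_qf v f \<or> eval_qf v g)"

fun all_block :: "nat list \<Rightarrow> ((nat \<Rightarrow> nat list) \<Rightarrow> bool) \<Rightarrow> (nat \<Rightarrow> nat list) \<Rightarrow> bool" where
  "all_block [] K v = K v"
| "all_block (x # xs) K v = (\<forall>p\<in>partitions. all_block xs K (v(x := p)))"

fun ex_block :: "nat list \<Rightarrow> ((nat \<Rightarrow> nat list) \<Rightarrow> bool) \<Rightarrow> (nat \<Rightarrow> nat list) \<Rightarrow> bool" where
  "ex_block [] K v = K v"
| "ex_block (x # xs) K v = (\<exists>p\<in>partitions. ex_block xs K (v(x := p)))"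

text \<open>A prenex formula is a list of quantifier blocks (alternating, the first one
  universal iff the flag is True) followed by a quantifier-free matrix.\<close>
fun sat_prenex :: "bool \<Rightarrow> nat list list \<Rightarrow> qf \<Rightarrow> (nat \<Rightarrow> nat list) \<Rightarrow> bool" where
  "sat_prenex u [] f v = eval_qf v f"
| "sat_prenex u (b # bs) f v =
     (if u then all_block b (sat_prenex False bs f) v
      else ex_block b (sat_prenex True bs f) v)"

definition Pi_definable :: "nat \<Rightarrow> nat list set \<Rightarrow> bool" where
  "Pi_definable n S \<longleftrightarrow>
     (\<exists>bs f. length bs = n \<and>
        (\<forall>v. (\<forall>i. v i \<in> partitions) \<longrightarrow> (sat_prenex True bs f v \<longleftrightarrow> v 0 \<in> S)))"

end

theory Submission
  imports Defs
begin

lemma part_pos: "xs \<in> partitions \<Longrightarrow> i < length xs \<Longrightarrow> 0 < xs!i"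
  unfolding partitions_def by (auto simp: nth_mem)

lemma part_mono: "xs \<in> partitions \<Longrightarrow> i \<le> j \<Longrightarrow> j < length xs \<Longrightarrow> xs!j \<le> xs!i"
  unfolding partitions_def
  by (cases "i = j") (auto simp: sorted_wrt_iff_nth_less)

lemma partsI: "(\<And>i j. i < j \<Longrightarrow> j < length xs \<Longrightarrow> xs!j \<le> xs!i) \<Longrightarrow> (\<And>i. i < length xs \<Longrightarrow> 0 < xs!i) \<Longrightarrow> xs \<in> partitions"
  unfolding partitions_def by (auto simp: sorted_wrt_iff_nth_less in_set_conv_nth)

lemma col_lemma:
  assumes K: "K \<in> partitions"
    and ch: "\<forall>y\<in>partitions. \<forall>z\<in>partitions. young_le y K \<and> young_le z K \<longrightarrow> young_le y z \<or> young_le z y"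
    and c: "young_le K part11 \<or> young_le part11 K"
  shows "\<forall>i<length K. K!i = 1"
proof (rule ccontr)
  assume "\<not> ?thesis"
  then obtain i where i: "i < length K" "K!i \<noteq> 1" by auto
  have "K!i \<ge> 2" using part_pos[OF K i(1)] i(2) by linarith
  moreover have "K!i \<le> K!0" using part_mono[OF K, of 0 i] i by auto
  ultimately have k0: "K!0 \<ge> 2" by linarith
  show False using c
  proof
    assume "young_le K part11" thus False using k0 i unfolding young_le_def part11_def
      by (cases K) auto
  next
    assume h: "young_le part11 K"
    have p2: "[2] \<in> partitions" "[1,1] \<in> partitions" unfolding partitions_def by auto
    have "young_le [2] K" using k0 i unfolding young_le_def by auto
    with ch p2 h have "young_le [2] [1,1] \<or> young_le [1,1] [2]" unfolding part11_def by blast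
    thus False unfolding young_le_def by auto
  qed
qed

lemma row_lemma: assumes P: "P \<in> partitions" and n: "\<not> young_le part11 P" shows "length P \<le> 1"
proof (rule ccontr)
  assume "\<not> ?thesis"
  hence l: "length P \<ge> 2" by auto
  have "P \<noteq> []" using l by auto
  hence "0 < P!0" "0 < P!1" using part_pos[OF P, of 0] part_pos[OF P, of 1] l by auto
  hence "young_le part11 P" using l unfolding young_le_def part11_def by (auto simp: less_Suc_eq)
  thus False using n by simp
qed

lemma cover_row:
  assumes x: "x \<in> partitions" and x': "x' \<in> partitions" and l: "length x' \<le> 1"
    and le: "young_le x x'" and ne: "x \<noteq> x'"
    and cov: "\<forall>y\<in>partitions. young_le x y \<and> young_le y x' \<longrightarrow> y = x \<or> y = x'"
  shows "length x' = 1 \<and> length x \<le> 1 \<and> sum_list x' = sum_list x + 1"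
proof -
  have lx: "length x \<le> length x'" using le unfolding young_le_def by auto
  have "x' \<noteq> []" using lx ne by auto
  then obtain m where m: "x' = [m]" using l by (cases x') auto
  have m1: "m \<ge> 1" using part_pos[OF x', of 0] m by auto
  show ?thesis
  proof (cases x)
    case Nil
    have "[1] \<in> partitions" unfolding partitions_def by auto
    moreover have "young_le x [1]" "young_le [1] x'" using Nil m m1 unfolding young_le_def by auto
    ultimately have "[1] = x \<or> [1] = x'" using cov by blast
    thus ?thesis using Nil m by auto
  next
    case (Cons p r)
    with lx m have r: "r = []" by auto
    have pm: "p \<le> m" using le Cons m unfolding young_le_def by auto
    have pm2: "p \<noteq> m" using ne Cons m r by auto
    have "[p+1] \<in> partitions" unfolding partitions_def by auto
    moreover have "young_le x [p+1]" "young_le [p+1] x'" using Cons r m pm pm2 unfolding young_le_def by auto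
    ultimately have "[p+1] = x \<or> [p+1] = x'" using cov by blast
    thus ?thesis using Cons r m by auto
  qed
qed


lemma rect_lemma:
  assumes A: "A \<in> partitions" and W: "W \<in> partitions" and le: "young_le W A" and ne: "W \<noteq> A"
    and all: "\<forall>y\<in>partitions. young_le y A \<and> y \<noteq> A \<longrightarrow> young_le y W"
  shows "\<forall>i<length A. A!0 \<le> A!i"
proof (cases "A = []")
  case True thus ?thesis by simp
next
  case False
  define n where "n = length A - 1"
  have nl: "n < length A" using False n_def by auto
  have eq: "A!n = A!0"
  proof (rule ccontr)
    assume neq: "A!n \<noteq> A!0"
    define y1 where "y1 = butlast A"
    define y2 where "y2 = replicate (length A) (A!n)"
    have y1p: "y1 \<in> partitions"
      apply (rule partsI) unfolding y1_def
      using part_mono[OF A] part_pos[OF A] by (auto simp: nth_butlast)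
    have y2p: "y2 \<in> partitions"
      apply (rule partsI) unfolding y2_def using part_pos[OF A nl] by auto
    have y1le: "young_le y1 A" unfolding young_le_def y1_def by (auto simp: nth_butlast)
    have y1ne: "y1 \<noteq> A" unfolding y1_def using False
      by (metis length_butlast diff_less length_greater_0_conv less_numeral_extra(1) less_irrefl)
    have y2le: "young_le y2 A" unfolding young_le_def y2_def using part_mono[OF A _ nl] n_def by auto
    have y2ne: "y2 \<noteq> A" unfolding y2_def using neq False
      by (metis length_greater_0_conv nth_replicate)
    have w1: "young_le y1 W" using all y1p y1le y1ne by blast
    have w2: "young_le y2 W" using all y2p y2le y2ne by blast
    have lw: "length W = length A" using w2 le unfolding young_le_def y2_def by auto
    have "W = A"
    proof (rule nth_equalityI)
      show "length W = length A" by fact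
      fix k assume k: "k < length W"
      have "W!k \<le> A!k" using le k unfolding young_le_def by auto
      moreover have "A!k \<le> W!k"
      proof (cases "k < n")
        case True thus ?thesis using w1 unfolding young_le_def y1_def
          by (auto simp: nth_butlast n_def)
      next
        case False hence "k = n" using k lw n_def by auto
        thus ?thesis using w2 k lw unfolding young_le_def y2_def by auto
      qed
      ultimately show "W!k = A!k" by simp
    qed
    thus False using ne by simp
  qed
  show ?thesis
  proof (intro allI impI)
    fix i assume "i < length A"
    thus "A!0 \<le> A!i" using part_mono[OF A, of i n] eq n_def by auto
  qed
qed


definition Cs :: "nat list \<Rightarrow> nat list \<Rightarrow> nat list \<Rightarrow> nat list \<Rightarrow> nat list \<Rightarrow> nat list \<Rightarrow> nat list \<Rightarrow> nat list \<Rightarrow> nat list \<Rightarrow> nat list \<Rightarrow> bool" where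
 "Cs L K P P1 P2 A W Z y z \<longleftrightarrow>
 ((young_le y K \<and> young_le z K) \<longrightarrow> (young_le y z \<or> young_le z y)) \<and>
 (young_le K part11 \<or> young_le part11 K) \<and>
 \<not> young_le part11 P2 \<and>
 (young_le P P1 \<and> P \<noteq> P1 \<and> (young_le P y \<and> young_le y P1 \<longrightarrow> y = P \<or> y = P1)) \<and>
 (young_le P1 P2 \<and> P1 \<noteq> P2 \<and> (young_le P1 y \<and> young_le y P2 \<longrightarrow> y = P1 \<or> y = P2)) \<and>
 (young_le W A \<and> W \<noteq> A \<and> (young_le y A \<and> y \<noteq> A \<longrightarrow> young_le y W)) \<and>
 young_le K A \<and> young_le P A \<and> young_le A L \<and>
 \<not> young_le K Z \<and> \<not> young_le P2 Z \<and> \<not> young_le Z L"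

lemma CsD:
  assumes "Cs L K P P1 P2 A W Z y z"
  shows "young_le y K \<and> young_le z K \<longrightarrow> young_le y z \<or> young_le z y"
   "young_le K part11 \<or> young_le part11 K"
   "\<not> young_le part11 P2"
   "young_le P P1" "P \<noteq> P1" "young_le P y \<and> young_le y P1 \<longrightarrow> y = P \<or> y = P1"
   "young_le P1 P2" "P1 \<noteq> P2" "young_le P1 y \<and> young_le y P2 \<longrightarrow> y = P1 \<or> y = P2"
   "young_le W A" "W \<noteq> A" "young_le y A \<and> y \<noteq> A \<longrightarrow> young_le y W"
   "young_le K A" "young_le P A" "young_le A L"
   "\<not> young_le K Z" "\<not> young_le P2 Z" "\<not> young_le Z L"
  using assms unfolding Cs_def by simp_all

lemma bad_lemma:
  assumes L: "L \<in> partitions" and K: "K \<in> partitions" and P: "P \<in> partitions"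
    and P1: "P1 \<in> partitions" and P2: "P2 \<in> partitions" and A: "A \<in> partitions"
    and W: "W \<in> partitions" and Z: "Z \<in> partitions"
    and all: "\<forall>y\<in>partitions. \<forall>z\<in>partitions. Cs L K P P1 P2 A W Z y z"
  shows "\<not> distinct L"
proof
  assume dist: "distinct L"
  have e: "[] \<in> partitions" unfolding partitions_def by auto
  have C0: "Cs L K P P1 P2 A W Z [] []" using all e by blast
  note D0 = CsD[OF C0]
  have ch: "\<forall>y\<in>partitions. \<forall>z\<in>partitions. young_le y K \<and> young_le z K \<longrightarrow> young_le y z \<or> young_le z y"
  proof (intro ballI)
    fix y z assume "y \<in> partitions" "z \<in> partitions"
    thus "young_le y K \<and> young_le z K \<longrightarrow> young_le y z \<or> young_le z y" using all CsD(1) by blast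
  qed
  have cov1: "\<forall>y\<in>partitions. young_le P y \<and> young_le y P1 \<longrightarrow> y = P \<or> y = P1"
  proof
    fix y assume "y \<in> partitions"
    hence "Cs L K P P1 P2 A W Z y []" using all e by blast
    thus "young_le P y \<and> young_le y P1 \<longrightarrow> y = P \<or> y = P1" by (rule CsD(6))
  qed
  have cov2: "\<forall>y\<in>partitions. young_le P1 y \<and> young_le y P2 \<longrightarrow> y = P1 \<or> y = P2"
  proof
    fix y assume "y \<in> partitions"
    hence "Cs L K P P1 P2 A W Z y []" using all e by blast
    thus "young_le P1 y \<and> young_le y P2 \<longrightarrow> y = P1 \<or> y = P2" by (rule CsD(9))
  qed
  have covA: "\<forall>y\<in>partitions. young_le y A \<and> y \<noteq> A \<longrightarrow> young_le y W"
  proof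
    fix y assume "y \<in> partitions"
    hence "Cs L K P P1 P2 A W Z y []" using all e by blast
    thus "young_le y A \<and> y \<noteq> A \<longrightarrow> young_le y W" by (rule CsD(12))
  qed
  have Kc: "\<forall>i<length K. K!i = 1" using col_lemma[OF K ch D0(2)] .
  have lP2: "length P2 \<le> 1" using row_lemma[OF P2 D0(3)] .
  have cv2: "length P2 = 1 \<and> length P1 \<le> 1 \<and> sum_list P2 = sum_list P1 + 1"
    using cover_row[OF P1 P2 lP2 D0(7) D0(8) cov2] .
  have lP1: "length P1 \<le> 1" using cv2 by simp
  have cv1: "length P1 = 1 \<and> length P \<le> 1 \<and> sum_list P1 = sum_list P + 1"
    using cover_row[OF P P1 lP1 D0(4) D0(5) cov1] .
  have rA: "\<forall>i<length A. A!0 \<le> A!i"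
    using rect_lemma[OF A W D0(10) D0(11) covA] .
  define t where "t = sum_list P"
  define k where "k = length K"
  have KA: "young_le K A" and PA: "young_le P A" and AL: "young_le A L" and KZ: "\<not> young_le K Z"
    and P2Z: "\<not> young_le P2 Z" and ZL: "\<not> young_le Z L" using D0 by simp_all
  have kA: "k \<le> length A" using KA unfolding young_le_def k_def by auto
  have AL1: "length A \<le> length L" "\<forall>i<length A. A!i \<le> L!i" using AL unfolding young_le_def by auto
  have lZ: "length Z < k"
  proof (rule ccontr)
    assume "\<not> ?thesis"
    hence "young_le K Z" unfolding young_le_def k_def using Kc part_pos[OF Z]
      by (metis Suc_leI not_less One_nat_def order.strict_trans2)
    thus False using KZ by simp
  qed
  have tA: "length A > 0 \<Longrightarrow> t \<le> A!0"
  proof -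
    assume "length A > 0"
    show "t \<le> A!0"
    proof (cases P)
      case Nil thus ?thesis by (simp add: t_def)
    next
      case (Cons p r) hence "r = []" using cv1 by auto
      thus ?thesis using PA Cons unfolding young_le_def t_def by auto
    qed
  qed
  obtain m where m: "P2 = [m]" using cv2 by (cases P2) auto
  have mt: "m = t + 2" using cv1 cv2 m t_def by auto
  have Z0: "Z \<noteq> [] \<Longrightarrow> Z!0 < t + 2" using P2Z m mt unfolding young_le_def
    by (cases Z) auto
  obtain i where i: "i < length Z" "L!i < Z!i"
  proof -
    have "length Z \<le> length L" using lZ kA AL1 by auto
    thus ?thesis using ZL that unfolding young_le_def by (auto simp: not_le)
  qed
  have Zne: "Z \<noteq> []" using i by auto
  have "Z!i \<le> Z!0" using part_mono[OF Z, of 0 i] i by auto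
  hence zi: "Z!i \<le> t + 1" using Z0[OF Zne] by auto
  have iA: "i + 1 < length A" using i lZ kA by auto
  have "length A > 0" using iA by linarith
  hence tA0: "t \<le> A!0" using tA by blast
  have "A!0 \<le> A!i" "A!i \<le> L!i" using rA AL1 iA by auto
  hence Li: "t \<le> L!i" using tA0 by linarith
  have "A!0 \<le> A!(i+1)" "A!(i+1) \<le> L!(i+1)" using rA AL1 iA by auto
  hence Li1: "t \<le> L!(i+1)" using tA0 by linarith
  have "L!(i+1) \<le> L!i" using part_mono[OF L, of i "i+1"] iA AL1 by auto
  hence "L!i = L!(i+1)" using Li Li1 zi i by auto
  moreover have "i + 1 < length L" using iA AL1 by auto
  ultimately show False using dist nth_eq_iff_index_eq[OF dist, of i "i+1"] by auto
qed


lemma rep_part: "0 < c \<Longrightarrow> replicate k c \<in> partitions"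
  by (rule partsI) auto

lemma le_ones: assumes "y \<in> partitions" "young_le y (replicate n (1::nat))"
  shows "length y \<le> n" "\<forall>j<length y. y!j = 1"
proof -
  show "length y \<le> n" using assms(2) unfolding young_le_def by simp
  show "\<forall>j<length y. y!j = 1"
  proof (intro allI impI)
    fix j assume j: "j < length y"
    have "j < n" using j assms(2) unfolding young_le_def by simp
    hence "y!j \<le> 1" using assms(2) j unfolding young_le_def by auto
    moreover have "0 < y!j" using part_pos[OF assms(1) j] .
    ultimately show "y!j = 1" by simp
  qed
qed

lemma row_cov: "y \<in> partitions \<Longrightarrow> young_le [a] y \<Longrightarrow> young_le y [Suc a] \<Longrightarrow> y = [a] \<or> y = [Suc a]"
  unfolding young_le_def by (cases y) auto

definition Wd :: "nat \<Rightarrow> nat \<Rightarrow> nat list" where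
  "Wd n t = replicate (n - 1) t @ (if t = 1 then [] else [t - 1])"

lemma Wd_part: assumes "1 \<le> t" shows "Wd n t \<in> partitions"
proof (rule partsI)
  fix i j assume ij: "i < j" "j < length (Wd n t)"
  show "Wd n t ! j \<le> Wd n t ! i" using ij assms unfolding Wd_def
    by (auto simp: nth_append split: if_splits)
next
  fix i assume "i < length (Wd n t)"
  thus "0 < Wd n t ! i" using assms unfolding Wd_def by (auto simp: nth_append split: if_splits)
qed

lemma Wd_le: "1 \<le> n \<Longrightarrow> young_le (Wd n t) (replicate n t)"
  unfolding young_le_def Wd_def by (auto simp: nth_append)

lemma Wd_ne: "1 \<le> n \<Longrightarrow> 1 \<le> t \<Longrightarrow> Wd n t \<noteq> replicate n t"
proof
  assume n: "1 \<le> n" and t: "1 \<le> t" and eq: "Wd n t = replicate n t"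
  show False
  proof (cases "t = 1")
    case True
    hence "length (Wd n t) = n - 1" unfolding Wd_def by simp
    hence "length (replicate n t) = n - 1" using eq by simp
    thus False using n by simp
  next
    case False
    hence "Wd n t ! (n-1) = t - 1" unfolding Wd_def by (simp add: nth_append)
    moreover have "replicate n t ! (n-1) = t" using n by simp
    ultimately show False using eq False t by simp
  qed
qed

lemma Wd_cov:
  assumes y: "y \<in> partitions" and n: "1 \<le> n" and t: "1 \<le> t"
    and le: "young_le y (replicate n t)" and ne: "y \<noteq> replicate n t"
  shows "young_le y (Wd n t)"
proof (cases "length y < n")
  case True
  have "length (Wd n t) \<ge> n - 1" unfolding Wd_def by simp
  moreover have "\<forall>j<length y. y!j \<le> Wd n t ! j"
    using le True unfolding young_le_def Wd_def by (auto simp: nth_append)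
  ultimately show ?thesis unfolding young_le_def using True by auto
next
  case False
  hence ly: "length y = n" using le unfolding young_le_def by auto
  have "\<exists>j<n. y!j \<noteq> t"
  proof (rule ccontr)
    assume "\<not> ?thesis"
    hence "y = replicate n t" using ly by (intro nth_equalityI) auto
    thus False using ne by simp
  qed
  then obtain j where j: "j < n" "y!j \<noteq> t" by auto
  have "y!j \<le> t" using le j ly unfolding young_le_def by auto
  hence yj: "y!j < t" using j by auto
  have last: "y!(n-1) \<le> y!j" using part_mono[OF y, of j "n-1"] j ly by auto
  have pos: "0 < y!(n-1)" using part_pos[OF y, of "n-1"] ly n by auto
  have t1: "t \<noteq> 1" using yj last pos by auto
  have lW: "length (Wd n t) = n" using t1 n unfolding Wd_def by auto
  show ?thesis unfolding young_le_def
  proof (intro conjI allI impI)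
    show "length y \<le> length (Wd n t)" using lW ly by simp
    fix k assume k: "k < length y"
    show "y!k \<le> Wd n t ! k"
    proof (cases "k = n - 1")
      case True thus ?thesis using t1 yj last unfolding Wd_def by (simp add: nth_append)
    next
      case False hence "k < n - 1" using k ly by auto
      thus ?thesis using le k unfolding young_le_def Wd_def by (auto simp: nth_append)
    qed
  qed
qed


lemma adj_eq: assumes L: "L \<in> partitions" and nd: "\<not> distinct L"
  shows "\<exists>i. Suc i < length L \<and> L!i = L!(Suc i)"
proof -
  obtain i j where ij: "i < length L" "j < length L" "i \<noteq> j" "L!i = L!j"
    using nd by (auto simp: distinct_conv_nth)
  then obtain a b where ab: "a < b" "b < length L" "L!a = L!b"
    by (metis nat_neq_iff)
  have "L!(Suc a) \<le> L!a" using part_mono[OF L, of a "Suc a"] ab by auto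
  moreover have "L!b \<le> L!(Suc a)" using part_mono[OF L, of "Suc a" b] ab by auto
  ultimately show ?thesis using ab by (intro exI[of _ a]) auto
qed

lemma good_lemma:
  assumes L: "L \<in> partitions" and nd: "\<not> distinct L"
  obtains K P P1 P2 A W Z where "K \<in> partitions" "P \<in> partitions" "P1 \<in> partitions" "P2 \<in> partitions"
    "A \<in> partitions" "W \<in> partitions" "Z \<in> partitions"
    "\<forall>y\<in>partitions. \<forall>z\<in>partitions. Cs L K P P1 P2 A W Z y z"
proof -
  obtain i where i: "Suc i < length L" "L!i = L!(Suc i)" using adj_eq[OF L nd] by auto
  define t where "t = L!i"
  define n where "n = Suc (Suc i)"
  have t1: "1 \<le> t" using part_pos[OF L, of i] i unfolding t_def by auto
  have n1: "1 \<le> n" "2 \<le> n" unfolding n_def by auto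
  have Ljt: "\<forall>j<n. t \<le> L!j"
  proof (intro allI impI)
    fix j assume "j < n"
    hence "j \<le> Suc i" unfolding n_def by simp
    thus "t \<le> L!j" using part_mono[OF L, of j "Suc i"] i unfolding t_def by auto
  qed
  define K where "K = replicate n (1::nat)"
  define A where "A = replicate n t"
  define Z where "Z = replicate (Suc i) (Suc t)"
  have memb: "K \<in> partitions" "[t] \<in> partitions" "[Suc t] \<in> partitions" "[Suc (Suc t)] \<in> partitions"
    "A \<in> partitions" "Wd n t \<in> partitions" "Z \<in> partitions"
    unfolding K_def A_def Z_def using rep_part[of 1 n] rep_part[of t n] rep_part[of "Suc t" "Suc i"]
      Wd_part[OF t1] t1 by (auto simp: partitions_def)
  have all: "\<forall>y\<in>partitions. \<forall>z\<in>partitions. Cs L K [t] [Suc t] [Suc (Suc t)] A (Wd n t) Z y z"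
  proof (intro ballI)
    fix y z assume y: "y \<in> partitions" and z: "z \<in> partitions"
    have c1: "young_le y K \<and> young_le z K \<longrightarrow> young_le y z \<or> young_le z y"
    proof
      assume h: "young_le y K \<and> young_le z K"
      have yy: "\<forall>j<length y. y!j = 1" and zz: "\<forall>j<length z. z!j = 1"
        using le_ones[OF y] le_ones[OF z] h unfolding K_def by auto
      show "young_le y z \<or> young_le z y"
      proof (cases "length y \<le> length z")
        case True thus ?thesis using yy zz unfolding young_le_def by auto
      next
        case False thus ?thesis using yy zz unfolding young_le_def by auto
      qed
    qed
    have c2: "young_le K part11 \<or> young_le part11 K"
      using n1 unfolding K_def part11_def young_le_def by (auto simp: less_Suc_eq)
    have c3: "\<not> young_le part11 [Suc (Suc t)]" unfolding part11_def young_le_def by simp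
    have c4: "young_le [t] y \<and> young_le y [Suc t] \<longrightarrow> y = [t] \<or> y = [Suc t]"
      using row_cov[OF y] by blast
    have c5: "young_le [Suc t] y \<and> young_le y [Suc (Suc t)] \<longrightarrow> y = [Suc t] \<or> y = [Suc (Suc t)]"
      using row_cov[OF y] by blast
    have c6: "young_le y A \<and> y \<noteq> A \<longrightarrow> young_le y (Wd n t)"
      using Wd_cov[OF y n1(1) t1] unfolding A_def by blast
    have c7: "young_le K A" unfolding K_def A_def young_le_def using t1 by simp
    have c8: "young_le [t] A" unfolding A_def young_le_def using n1 by auto
    have c9: "young_le A L" unfolding A_def young_le_def
    proof (intro conjI allI impI)
      show "length (replicate n t) \<le> length L" using i n_def by simp
      fix j assume "j < length (replicate n t)"
      hence "j < n" by simp
      thus "replicate n t ! j \<le> L ! j" using Ljt by simp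
    qed
    have c10: "\<not> young_le K Z" unfolding K_def Z_def young_le_def n_def by simp
    have c11: "\<not> young_le [Suc (Suc t)] Z" unfolding Z_def young_le_def by simp
    have c12: "\<not> young_le Z L"
    proof
      assume "young_le Z L"
      hence "Z!i \<le> L!i" unfolding young_le_def Z_def by simp
      moreover have "Z!i = Suc t" unfolding Z_def by (rule nth_replicate) simp
      ultimately show False unfolding t_def by simp
    qed
    have c13: "young_le [t] [Suc t]" "young_le [Suc t] [Suc (Suc t)]" unfolding young_le_def by auto
    show "Cs L K [t] [Suc t] [Suc (Suc t)] A (Wd n t) Z y z"
      unfolding Cs_def using c1 c2 c3 c4 c5 c6 c7 c8 c9 c10 c11 c12 c13
        Wd_le[OF n1(1), of t] Wd_ne[OF n1(1) t1] unfolding A_def by simp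
  qed
  show thesis by (rule that[OF memb all])
qed


definition Imp :: "qf \<Rightarrow> qf \<Rightarrow> qf" where "Imp a b = Disj (Neg a) b"

definition fC :: qf where
 "fC = Conj (Imp (Conj (Le (Var 8) (Var 1)) (Le (Var 9) (Var 1))) (Disj (Le (Var 8) (Var 9)) (Le (Var 9) (Var 8))))
  (Conj (Disj (Le (Var 1) Cst) (Le Cst (Var 1)))
  (Conj (Neg (Le Cst (Var 4)))
  (Conj (Conj (Le (Var 2) (Var 3)) (Conj (Neg (Eq (Var 2) (Var 3))) (Imp (Conj (Le (Var 2) (Var 8)) (Le (Var 8) (Var 3))) (Disj (Eq (Var 8) (Var 2)) (Eq (Var 8) (Var 3))))))
  (Conj (Conj (Le (Var 3) (Var 4)) (Conj (Neg (Eq (Var 3) (Var 4))) (Imp (Conj (Le (Var 3) (Var 8)) (Le (Var 8) (Var 4))) (Disj (Eq (Var 8) (Var 3)) (Eq (Var 8) (Var 4))))))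
  (Conj (Conj (Le (Var 6) (Var 5)) (Conj (Neg (Eq (Var 6) (Var 5))) (Imp (Conj (Le (Var 8) (Var 5)) (Neg (Eq (Var 8) (Var 5)))) (Le (Var 8) (Var 6)))))
  (Conj (Le (Var 1) (Var 5))
  (Conj (Le (Var 2) (Var 5))
  (Conj (Le (Var 5) (Var 0))
  (Conj (Neg (Le (Var 1) (Var 7)))
  (Conj (Neg (Le (Var 4) (Var 7)))
  (Neg (Le (Var 7) (Var 0)))))))))))))"

lemma eval_fC: "eval_qf v fC = Cs (v 0) (v 1) (v 2) (v 3) (v 4) (v 5) (v 6) (v 7) (v 8) (v 9)"
  unfolding fC_def Imp_def Cs_def by (simp only: eval_qf.simps eval_trm.simps imp_conv_disj)

lemma sat_eq: "sat_prenex True [[1,2,3,4,5,6,7],[8,9]] (Neg fC) v \<longleftrightarrow>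
  (\<forall>K\<in>partitions. \<forall>P\<in>partitions. \<forall>P1\<in>partitions. \<forall>P2\<in>partitions. \<forall>A\<in>partitions.
    \<forall>W\<in>partitions. \<forall>Z\<in>partitions. \<exists>y\<in>partitions. \<exists>z\<in>partitions. \<not> Cs (v 0) K P P1 P2 A W Z y z)"
  by (simp add: eval_fC)

theorem proposition3p5:
  shows "Pi_definable 2 {p \<in> partitions. distinct p}"
  unfolding Pi_definable_def
proof (intro exI conjI allI impI)
  show "length [[1,2,3,4,5,6,7::nat],[8,9]] = 2" by simp
  fix v :: "nat \<Rightarrow> nat list" assume v: "\<forall>i. v i \<in> partitions"
  hence L: "v 0 \<in> partitions" by simp
  show "sat_prenex True [[1,2,3,4,5,6,7],[8,9]] (Neg fC) v = (v 0 \<in> {p \<in> partitions. distinct p})"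
    unfolding sat_eq
  proof
    assume h: "\<forall>K\<in>partitions. \<forall>P\<in>partitions. \<forall>P1\<in>partitions. \<forall>P2\<in>partitions. \<forall>A\<in>partitions.
    \<forall>W\<in>partitions. \<forall>Z\<in>partitions. \<exists>y\<in>partitions. \<exists>z\<in>partitions. \<not> Cs (v 0) K P P1 P2 A W Z y z"
    have "distinct (v 0)"
    proof (rule ccontr)
      assume "\<not> distinct (v 0)"
      then obtain K P P1 P2 A W Z where m: "K \<in> partitions" "P \<in> partitions" "P1 \<in> partitions" "P2 \<in> partitions"
        "A \<in> partitions" "W \<in> partitions" "Z \<in> partitions"
        and all: "\<forall>y\<in>partitions. \<forall>z\<in>partitions. Cs (v 0) K P P1 P2 A W Z y z"
        using good_lemma[OF L] by metis
      obtain y z where "y \<in> partitions" "z \<in> partitions" "\<not> Cs (v 0) K P P1 P2 A W Z y z"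
        using h[rule_format, OF m] by blast
      thus False using all by blast
    qed
    thus "v 0 \<in> {p \<in> partitions. distinct p}" using L by simp
  next
    assume "v 0 \<in> {p \<in> partitions. distinct p}"
    hence d: "distinct (v 0)" by simp
    show "\<forall>K\<in>partitions. \<forall>P\<in>partitions. \<forall>P1\<in>partitions. \<forall>P2\<in>partitions. \<forall>A\<in>partitions.
    \<forall>W\<in>partitions. \<forall>Z\<in>partitions. \<exists>y\<in>partitions. \<exists>z\<in>partitions. \<not> Cs (v 0) K P P1 P2 A W Z y z"
    proof (intro ballI)
      fix K P P1 P2 A W Z assume m: "K \<in> partitions" "P \<in> partitions" "P1 \<in> partitions" "P2 \<in> partitions"
        "A \<in> partitions" "W \<in> partitions" "Z \<in> partitions"
      show "\<exists>y\<in>partitions. \<exists>z\<in>partitions. \<not> Cs (v 0) K P P1 P2 A W Z y z"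
      proof (rule ccontr)
        assume "\<not> ?thesis"
        hence "\<forall>y\<in>partitions. \<forall>z\<in>partitions. Cs (v 0) K P P1 P2 A W Z y z" by blast
        from bad_lemma[OF L m this] d show False by simp
      qed
    qed
  qed
qed

end
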